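(* Let $p(x)=a_0+a_1x+\dots+a_dx^d$, $d\ge1$, have positive integer coefficients, $r=p(1)$, and fix a type map $\tau$ as in the context. For every $q\in(0,1/a_0)$, every integer $k\ge1$ and every $x\in[0,1]$, the derivative $$\mathcal T^k_{p,q}(x)=\frac{\partial^k}{\partial s^k}S^p_{q,s}(x)\Big|_{s=q}$$ exists, and the function $\mathcal T^k_{p,q}$ is continuous on $[0,1]$.
   Context: Let $\mathcal A=\{0,1,\dots,r-1\}$ and let $\tau:\mathcal A\to\{0,\dots,d\}$ be a fixed map with $|\tau^{-1}(j)|=a_j$ for each $j$. For $q\in(0,1/a_0)$ let $t_q\in(0,1)$ be the unique solution in $(0,1)$ of $a_0q^d+a_1q^{d-1}t+\dots+a_dt^d=q^{d-1}$, and let $\nu_q$ be the product (Bernoulli) measure on $\mathcal A^{\mathbb N}$ whose coordinates are i.i.d. with $\nu_q(\omega_i=a)=t_q^{\tau(a)}/q^{\tau(a)-1}$. Let $F_q(y)=\nu_q\big(\{\omega:\sum_{i\ge1}\omega_ir^{-i}\le y\}\big)$ for $y\in[0,1]$; $F_q$ is a continuous strictly increasing bijection of $[0,1]$. For $q_1,q_2\in(0,1/a_0)$ put $S^p_{q_1,q_2}=F_{q_2}\circ F_{q_1}^{-1}$ (equivalently, $S^p_{q_1,q_2}$ maps the point with a given "$q_1$-$r$-adic" digit sequence to the point with the same digit sequence in the $q_2$-$r$-adic representation). *)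

theory Defs
  imports "HOL-Probability.Probability"
begin

text \<open>The polynomial p(x) = a 0 + a 1 x + ... + a d x^d is given by its coefficient
  function a and degree d; r = p(1). Digits are 0..r-1, tau is the type map.\<close>

definition rdig :: "(nat \<Rightarrow> nat) \<Rightarrow> nat \<Rightarrow> nat" where
  "rdig a d = (\<Sum>j\<le>d. a j)"

definition tq :: "(nat \<Rightarrow> nat) \<Rightarrow> nat \<Rightarrow> real \<Rightarrow> real" where
  "tq a d q = (THE t. 0 < t \<and> t < 1 \<and>
      (\<Sum>j\<le>d. real (a j) * q ^ (d - j) * t ^ j) = q ^ (d - 1))"

definition digit_weight :: "(nat \<Rightarrow> nat) \<Rightarrow> nat \<Rightarrow> (nat \<Rightarrow> nat) \<Rightarrow> real \<Rightarrow> nat \<Rightarrow> real" where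
  "digit_weight a d tau q i =
     (if i < rdig a d then tq a d q ^ tau i * q / q ^ tau i else 0)"

definition nu :: "(nat \<Rightarrow> nat) \<Rightarrow> nat \<Rightarrow> (nat \<Rightarrow> nat) \<Rightarrow> real \<Rightarrow> nat stream measure" where
  "nu a d tau q = stream_space (measure_pmf (embed_pmf (digit_weight a d tau q)))"

definition Fq :: "(nat \<Rightarrow> nat) \<Rightarrow> nat \<Rightarrow> (nat \<Rightarrow> nat) \<Rightarrow> real \<Rightarrow> real \<Rightarrow> real" where
  "Fq a d tau q y = measure (nu a d tau q)
     {\<omega> \<in> space (nu a d tau q). (\<Sum>i. real (\<omega> !! i) / real (rdig a d) ^ Suc i) \<le> y}"

definition Sp :: "(nat \<Rightarrow> nat) \<Rightarrow> nat \<Rightarrow> (nat \<Rightarrow> nat) \<Rightarrow> real \<Rightarrow> real \<Rightarrow> real \<Rightarrow> real" where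
  "Sp a d tau q1 q2 x = Fq a d tau q2 (inv_into {0..1} (Fq a d tau q1) x)"

definition kth_deriv_exists :: "(real \<Rightarrow> real) \<Rightarrow> nat \<Rightarrow> real \<Rightarrow> bool" where
  "kth_deriv_exists g k s0 \<longleftrightarrow>
     (\<forall>j. j + 1 < k \<longrightarrow> (\<forall>\<^sub>F s in nhds s0. (deriv ^^ j) g differentiable (at s))) \<and>
     (deriv ^^ (k - 1)) g differentiable (at s0)"

definition Tk :: "(nat \<Rightarrow> nat) \<Rightarrow> nat \<Rightarrow> (nat \<Rightarrow> nat) \<Rightarrow> nat \<Rightarrow> real \<Rightarrow> real \<Rightarrow> real" where
  "Tk a d tau k q x = (deriv ^^ k) (\<lambda>s. Sp a d tau q s x) q"

end

theory Submission
  imports Defs "HOL-Complex_Analysis.Complex_Analysis"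
begin

definition dig :: "nat \<Rightarrow> nat \<Rightarrow> real \<Rightarrow> nat" where
  "dig r n y = nat \<lfloor>real r ^ Suc n * y\<rfloor> mod r"

definition Sw :: "(nat \<Rightarrow> complex) \<Rightarrow> nat \<Rightarrow> complex" where
  "Sw w c = (\<Sum>i<c. w i)"

definition hterm :: "(nat \<Rightarrow> complex) \<Rightarrow> nat \<Rightarrow> real \<Rightarrow> nat \<Rightarrow> complex" where
  "hterm w r y n = (\<Prod>m<n. w (dig r m y)) * Sw w (dig r n y)"

definition Hs :: "(nat \<Rightarrow> complex) \<Rightarrow> nat \<Rightarrow> real \<Rightarrow> complex" where
  "Hs w r y = (if 1 \<le> y then 1 else suminf (hterm w r y))"

definition wt_ok :: "(nat \<Rightarrow> complex) \<Rightarrow> nat \<Rightarrow> real \<Rightarrow> bool" where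
  "wt_ok w r \<rho> \<longleftrightarrow> 2 \<le> r \<and> 0 \<le> \<rho> \<and> \<rho> < 1 \<and> (\<forall>c<r. norm (w c) \<le> \<rho>) \<and> Sw w r = 1"

lemma dig_lt: "0 < r \<Longrightarrow> dig r n y < r"
  by (simp add: dig_def)

lemma dig0:
  assumes "0 \<le> y" "y < 1" "0 < r"
  shows "real (dig r 0 y) \<le> real r * y" "real r * y < real (dig r 0 y) + 1"
proof -
  have f0: "0 \<le> \<lfloor>real r * y\<rfloor>" using assms by simp
  have f1: "\<lfloor>real r * y\<rfloor> < int r"
    using assms by (simp add: floor_less_iff)
  have "nat \<lfloor>real r * y\<rfloor> < r" using f0 f1 by (simp add: nat_less_iff)
  then have "dig r 0 y = nat \<lfloor>real r * y\<rfloor>"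
    by (simp add: dig_def)
  then show "real (dig r 0 y) \<le> real r * y" "real r * y < real (dig r 0 y) + 1"
    using f0 by linarith+
qed

lemma dig0_eq:
  assumes "real c \<le> real r * y" "real r * y < real c + 1" "c < r"
  shows "dig r 0 y = c"
proof -
  have "\<lfloor>real r * y\<rfloor> = int c" using assms by linarith
  then show ?thesis using assms by (simp add: dig_def)
qed

lemma dig_Suc:
  assumes "0 \<le> y" "y < 1" "0 < r"
  shows "dig r (Suc n) y = dig r n (real r * y - real (dig r 0 y))"
proof -
  define c where "c = dig r 0 y"
  have c1: "real c \<le> real r * y" "real r * y < real c + 1"
    using dig0[OF assms] by (auto simp: c_def)
  have eq: "real r ^ Suc (Suc n) * y = real r ^ Suc n * (real r * y - real c) + real (c * r ^ Suc n)"
    by (simp add: algebra_simps)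
  have nn: "0 \<le> real r ^ Suc n * (real r * y - real c)"
    using c1 by simp
  define K where "K = c * r ^ n * r"
  have K: "c * r ^ Suc n = K" by (simp add: K_def)
  have hlp: "\<And>a::int. 0 \<le> a \<Longrightarrow> nat (a + int K) = nat a + K" by simp
  have "\<lfloor>real r ^ Suc (Suc n) * y\<rfloor> = \<lfloor>real r ^ Suc n * (real r * y - real c)\<rfloor> + int K"
    unfolding eq K by (metis floor_add_int of_int_of_nat_eq)
  then have hN: "nat \<lfloor>real r ^ Suc (Suc n) * y\<rfloor> = nat \<lfloor>real r ^ Suc n * (real r * y - real c)\<rfloor> + K"
    using nn hlp by simp
  have "dig r (Suc n) y = (nat \<lfloor>real r ^ Suc n * (real r * y - real c)\<rfloor> + K) mod r"
    by (simp only: dig_def hN)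
  also have "\<dots> = nat \<lfloor>real r ^ Suc n * (real r * y - real c)\<rfloor> mod r"
    by (simp add: K_def)
  also have "\<dots> = dig r n (real r * y - real c)"
    by (simp only: dig_def)
  finally show ?thesis by (simp only: c_def)
qed

lemma dig_zero: "dig r n 0 = 0"
  by (simp add: dig_def)

lemma norm_Sw:
  assumes "wt_ok w r \<rho>" "c \<le> r"
  shows "norm (Sw w c) \<le> real r"
proof -
  have "norm (Sw w c) \<le> (\<Sum>i<c. norm (w i))" unfolding Sw_def by (rule norm_sum)
  also have "\<dots> \<le> (\<Sum>i<c. 1)"
  proof (intro sum_mono)
    fix i assume "i \<in> {..<c}"
    then have "norm (w i) \<le> \<rho>" "\<rho> < 1" using assms by (auto simp: wt_ok_def)
    then show "norm (w i) \<le> 1" by linarith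
  qed
  also have "\<dots> \<le> real r" using assms by simp
  finally show ?thesis .
qed

lemma norm_prod_w:
  assumes "wt_ok w r \<rho>"
  shows "norm (\<Prod>m<n. w (dig r m y)) \<le> \<rho> ^ n"
proof (induction n)
  case 0 then show ?case by simp
next
  case (Suc n)
  have "norm (w (dig r n y)) \<le> \<rho>" using assms dig_lt[of r n y] by (auto simp: wt_ok_def)
  moreover have "0 \<le> \<rho>" using assms by (simp add: wt_ok_def)
  ultimately have "norm (\<Prod>m<n. w (dig r m y)) * norm (w (dig r n y)) \<le> \<rho> ^ n * \<rho>"
    using Suc by (intro mult_mono) auto
  then show ?case
    by (simp add: norm_mult mult.commute)
qed

lemma norm_hterm:
  assumes "wt_ok w r \<rho>"
  shows "norm (hterm w r y n) \<le> real r * \<rho> ^ n"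
proof -
  have r0: "0 < r" using assms by (simp add: wt_ok_def)
  have "norm (hterm w r y n) \<le> \<rho> ^ n * real r"
    unfolding hterm_def norm_mult
    using norm_prod_w[OF assms] norm_Sw[OF assms, of "dig r n y"] dig_lt[OF r0, of n y] assms
    by (intro mult_mono) (auto simp: wt_ok_def)
  then show ?thesis by (simp add: mult.commute)
qed

lemma summable_geo_r: "0 \<le> \<rho> \<Longrightarrow> \<rho> < 1 \<Longrightarrow> summable (\<lambda>n. real r * \<rho> ^ n)"
  by (intro summable_mult summable_geometric) auto

lemma summable_hterm:
  assumes "wt_ok w r \<rho>"
  shows "summable (hterm w r y)"
  by (rule summable_comparison_test[where g="\<lambda>n. real r * \<rho> ^ n"])
     (use assms norm_hterm[OF assms] summable_geo_r[of \<rho> r] in \<open>auto simp: wt_ok_def\<close>)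

definition Bd :: "nat \<Rightarrow> real \<Rightarrow> real" where "Bd r \<rho> = real r / (1 - \<rho>)"

lemma Bd_ge1: "wt_ok w r \<rho> \<Longrightarrow> 1 \<le> Bd r \<rho>"
  by (simp add: Bd_def wt_ok_def field_simps)

lemma norm_Hs:
  assumes "wt_ok w r \<rho>"
  shows "norm (Hs w r y) \<le> Bd r \<rho>"
proof (cases "1 \<le> y")
  case True then have "Hs w r y = 1" by (simp add: Hs_def)
  then show ?thesis using Bd_ge1[OF assms] by simp
next
  case False
  have s: "summable (\<lambda>n. real r * \<rho> ^ n)"
    by (rule summable_geo_r) (use assms in \<open>auto simp: wt_ok_def\<close>)
  have sn: "summable (\<lambda>n. norm (hterm w r y n))"
    by (rule summable_comparison_test[where g="\<lambda>n. real r * \<rho> ^ n"]) (use norm_hterm[OF assms] s in auto)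
  have "norm (suminf (hterm w r y)) \<le> (\<Sum>n. norm (hterm w r y n))"
    by (rule summable_norm[OF sn])
  also have "\<dots> \<le> (\<Sum>n. real r * \<rho> ^ n)"
    by (rule suminf_le) (use norm_hterm[OF assms] s sn in auto)
  also have "\<dots> = real r * (\<Sum>n. \<rho> ^ n)"
    by (rule suminf_mult) (use assms in \<open>auto simp: wt_ok_def\<close>)
  also have "\<dots> = Bd r \<rho>"
    using assms suminf_geometric[of \<rho>] by (simp add: Bd_def wt_ok_def)
  finally show ?thesis using False by (simp add: Hs_def)
qed

lemma Hs_zero: "Hs w r 0 = 0"
proof -
  have "hterm w r 0 = (\<lambda>_. 0)" by (auto simp: hterm_def dig_zero Sw_def)
  then show ?thesis by (simp add: Hs_def)
qed

lemma Hs_rec: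
  assumes ok: "wt_ok w r \<rho>" and y: "0 \<le> y" "y < 1"
  shows "Hs w r y = Sw w (dig r 0 y) + w (dig r 0 y) * Hs w r (real r * y - real (dig r 0 y))"
proof -
  have r0: "0 < r" using ok by (simp add: wt_ok_def)
  define c where "c = dig r 0 y"
  define y' where "y' = real r * y - real c"
  have c1: "real c \<le> real r * y" "real r * y < real c + 1"
    using dig0[OF y r0] by (auto simp: c_def)
  have y': "0 \<le> y'" "y' < 1" using c1 by (auto simp: y'_def)
  have ht: "hterm w r y (Suc n) = w c * hterm w r y' n" for n
    unfolding hterm_def prod.lessThan_Suc_shift
    using dig_Suc[OF y r0] by (simp add: c_def y'_def)
  have "hterm w r y' sums Hs w r y'"
    using y' summable_hterm[OF ok] by (simp add: Hs_def summable_sums)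
  then have "(\<lambda>n. hterm w r y (Suc n)) sums (w c * Hs w r y')"
    unfolding ht by (rule sums_mult)
  then have "hterm w r y sums (w c * Hs w r y' + hterm w r y 0)"
    by (simp add: sums_Suc_iff)
  then have "suminf (hterm w r y) = w c * Hs w r y' + Sw w c"
    by (simp add: sums_iff hterm_def c_def)
  then show ?thesis using y by (simp add: Hs_def c_def[symmetric] y'_def[symmetric])
qed

lemma Sw_Suc: "Sw w (Suc c) = Sw w c + w c"
  by (simp add: Sw_def)

lemma Hs_rec_closed:
  assumes ok: "wt_ok w r \<rho>" and c: "c < r"
    and y: "real c / real r \<le> y" "y \<le> (real c + 1) / real r"
  shows "Hs w r y = Sw w c + w c * Hs w r (real r * y - real c)"
proof -
  have r0: "0 < r" using ok by (simp add: wt_ok_def)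
  have cr: "real c + 1 \<le> real r" using c by linarith
  show ?thesis
  proof (cases "y < (real c + 1) / real r")
    case True
    have y1: "y < 1" using True cr r0 by (smt (verit) divide_le_eq_1_pos of_nat_0_less_iff)
    have y0: "0 \<le> y" using y(1) r0 by (smt (verit) divide_nonneg_nonneg of_nat_0_le_iff)
    have "dig r 0 y = c"
      using True y r0 c by (intro dig0_eq) (auto simp: field_simps)
    then show ?thesis using Hs_rec[OF ok y0 y1] by simp
  next
    case False
    then have yy: "y = (real c + 1) / real r" using y by simp
    have ry: "real r * y - real c = 1" using r0 yy by (simp add: field_simps)
    show ?thesis
    proof (cases "Suc c = r")
      case True
      then have "y = 1" using yy r0 by simp
      then show ?thesis using ok True ry by (simp add: Hs_def wt_ok_def Sw_Suc[symmetric])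
    next
      case False
      then have c2: "Suc c < r" using c by simp
      have "real c + 1 < real r" using c2 by linarith
      then have "(real c + 1) / real r < 1" using r0 by (subst divide_less_eq_1_pos) auto
      then have y1: "y < 1" using yy by simp
      have y0: "0 \<le> y" using yy r0 by simp
      have d: "dig r 0 y = Suc c"
        using yy c2 r0 by (intro dig0_eq) (auto simp: field_simps)
      have "real r * y - real (Suc c) = 0" using ry by simp
      then have "Hs w r y = Sw w (Suc c)"
        using Hs_rec[OF ok y0 y1] d by (simp add: Hs_zero)
      then show ?thesis using ry by (simp add: Sw_Suc Hs_def)
    qed
  qed
qed

lemma Hs_level:
  assumes ok: "wt_ok w r \<rho>"
  shows "\<forall>j y y'. 0 \<le> y \<and> y \<le> 1 \<and> 0 \<le> y' \<and> y' \<le> 1 \<and>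
     real j / real r ^ n \<le> y \<and> y \<le> (real j + 1) / real r ^ n \<and>
     real j / real r ^ n \<le> y' \<and> y' \<le> (real j + 1) / real r ^ n \<longrightarrow>
     norm (Hs w r y - Hs w r y') \<le> 2 * Bd r \<rho> * \<rho> ^ n"
proof (induction n)
  case 0
  show ?case
  proof (intro allI impI)
    fix j y y' 
    have "norm (Hs w r y - Hs w r y') \<le> norm (Hs w r y) + norm (Hs w r y')" by (rule norm_triangle_ineq4)
    also have "\<dots> \<le> 2 * Bd r \<rho>" using norm_Hs[OF ok, of y] norm_Hs[OF ok, of y'] by simp
    finally show "norm (Hs w r y - Hs w r y') \<le> 2 * Bd r \<rho> * \<rho> ^ 0" by simp
  qed
next
  case (Suc n)
  have r0: "0 < r" and rho: "0 \<le> \<rho>" "\<rho> < 1" and wc: "\<And>c. c < r \<Longrightarrow> norm (w c) \<le> \<rho>"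
    using ok by (auto simp: wt_ok_def)
  have rpos: "0 < real r ^ n" using r0 by simp
  show ?case
  proof (intro allI impI)
    fix j y y'
    assume H: "0 \<le> y \<and> y \<le> 1 \<and> 0 \<le> y' \<and> y' \<le> 1 \<and>
     real j / real r ^ Suc n \<le> y \<and> y \<le> (real j + 1) / real r ^ Suc n \<and>
     real j / real r ^ Suc n \<le> y' \<and> y' \<le> (real j + 1) / real r ^ Suc n"
    show "norm (Hs w r y - Hs w r y') \<le> 2 * Bd r \<rho> * \<rho> ^ Suc n"
    proof (cases "j < r ^ Suc n")
      case False
      then have "real r ^ Suc n \<le> real j" by (metis not_less of_nat_le_iff of_nat_power)
      then have "1 \<le> real j / real r ^ Suc n" using r0 by simp
      then have "y = 1" "y' = 1" using H by auto
      then show ?thesis using rho Bd_ge1[OF ok] by simp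
    next
      case True
      define c where "c = j div r ^ n"
      define j' where "j' = j mod r ^ n"
      have jeq: "j = c * r ^ n + j'" using div_mult_mod_eq[of j "r ^ n"] by (simp add: c_def j'_def)
      have j'lt: "j' < r ^ n" using r0 by (simp add: j'_def)
      have clt: "c < r" using True r0 by (simp add: c_def less_mult_imp_div_less mult.commute)
      have j'le: "real j' + 1 \<le> real r ^ n" using j'lt
        by (metis Suc_leI of_nat_Suc of_nat_le_iff of_nat_power add.commute)
      have jr: "real j = real c * real r ^ n + real j'" using jeq by simp
      have rr: "real r ^ Suc n = real r * real r ^ n" by simp
      have key: "real c / real r \<le> z \<and> z \<le> (real c + 1) / real r \<and>
          real j' / real r ^ n \<le> real r * z - real c \<and> real r * z - real c \<le> (real j' + 1) / real r ^ n"
        if "real j / real r ^ Suc n \<le> z" "z \<le> (real j + 1) / real r ^ Suc n" for z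
      proof -
        have a: "real j \<le> z * (real r * real r ^ n)" "z * (real r * real r ^ n) \<le> real j + 1"
          using that r0 rpos by (simp_all add: rr field_simps)
        have b1: "real c * real r ^ n \<le> z * (real r * real r ^ n)"
          using a jr by (smt (verit) of_nat_0_le_iff)
        have b2: "z * (real r * real r ^ n) \<le> (real c + 1) * real r ^ n"
          using a jr j'le by (simp add: algebra_simps)
        have "real c \<le> z * real r" using b1 rpos r0 by (auto simp add: mult.assoc[symmetric] mult_le_cancel_right)
        moreover have "z * real r \<le> real c + 1" using b2 rpos r0
          by (auto simp add: mult.assoc[symmetric] mult_le_cancel_right)
        moreover have "real j' \<le> (real r * z - real c) * real r ^ n"
          using a jr by (simp add: algebra_simps)
        moreover have "(real r * z - real c) * real r ^ n \<le> real j' + 1"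
          using a jr by (simp add: algebra_simps)
        ultimately show ?thesis using r0 rpos by (simp add: field_simps)
      qed
      have ky: "real c / real r \<le> y \<and> y \<le> (real c + 1) / real r \<and>
          real j' / real r ^ n \<le> real r * y - real c \<and> real r * y - real c \<le> (real j' + 1) / real r ^ n"
        using H by (intro key) auto
      have ky': "real c / real r \<le> y' \<and> y' \<le> (real c + 1) / real r \<and>
          real j' / real r ^ n \<le> real r * y' - real c \<and> real r * y' - real c \<le> (real j' + 1) / real r ^ n"
        using H by (intro key) auto
      have range: "0 \<le> real r * z - real c \<and> real r * z - real c \<le> 1"
        if "real c / real r \<le> z" "z \<le> (real c + 1) / real r" for z
        using that r0 by (simp add: field_simps)
      have e1: "Hs w r y = Sw w c + w c * Hs w r (real r * y - real c)"
        using Hs_rec_closed[OF ok clt] ky by auto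
      have e2: "Hs w r y' = Sw w c + w c * Hs w r (real r * y' - real c)"
        using Hs_rec_closed[OF ok clt] ky' by auto
      have IH: "norm (Hs w r (real r * y - real c) - Hs w r (real r * y' - real c)) \<le> 2 * Bd r \<rho> * \<rho> ^ n"
        using Suc.IH range[of y] range[of y'] ky ky' by blast
      have "Hs w r y - Hs w r y' = w c * (Hs w r (real r * y - real c) - Hs w r (real r * y' - real c))"
        using e1 e2 by (simp add: algebra_simps)
      then have "norm (Hs w r y - Hs w r y') = norm (w c) * norm (Hs w r (real r * y - real c) - Hs w r (real r * y' - real c))"
        by (simp add: norm_mult)
      also have "\<dots> \<le> \<rho> * (2 * Bd r \<rho> * \<rho> ^ n)"
        using wc[OF clt] IH rho by (intro mult_mono) auto
      finally show ?thesis by (simp add: algebra_simps)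
    qed
  qed
qed

lemma Hs_near:
  assumes ok: "wt_ok w r \<rho>" and y: "0 \<le> y" "y \<le> 1" "0 \<le> y'" "y' \<le> 1"
    and d: "\<bar>y - y'\<bar> \<le> 1 / real r ^ n"
  shows "norm (Hs w r y - Hs w r y') \<le> 4 * Bd r \<rho> * \<rho> ^ n"
proof -
  have r0: "0 < r" using ok by (simp add: wt_ok_def)
  have rpos: "0 < real r ^ n" using r0 by simp
  have main: "norm (Hs w r a - Hs w r b) \<le> 4 * Bd r \<rho> * \<rho> ^ n"
    if ab: "0 \<le> a" "a \<le> b" "b \<le> 1" "b - a \<le> 1 / real r ^ n" for a b
  proof -
    define j where "j = nat \<lfloor>a * real r ^ n\<rfloor>"
    have f0: "0 \<le> \<lfloor>a * real r ^ n\<rfloor>" using ab rpos by simp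
    have jr: "real j \<le> a * real r ^ n" "a * real r ^ n < real j + 1"
      using f0 unfolding j_def by linarith+
    have ja: "real j / real r ^ n \<le> a" "a \<le> (real j + 1) / real r ^ n"
      using jr rpos by (simp_all add: field_simps)
    have bj: "b \<le> (real j + 2) / real r ^ n"
    proof -
      have "b * real r ^ n \<le> a * real r ^ n + 1" using ab rpos by (simp add: field_simps)
      then show ?thesis using jr rpos by (simp add: field_simps)
    qed
    have lev: "\<And>j y y'. 0 \<le> y \<Longrightarrow> y \<le> 1 \<Longrightarrow> 0 \<le> y' \<Longrightarrow> y' \<le> 1 \<Longrightarrow>
      real j / real r ^ n \<le> y \<Longrightarrow> y \<le> (real j + 1) / real r ^ n \<Longrightarrow>
      real j / real r ^ n \<le> y' \<Longrightarrow> y' \<le> (real j + 1) / real r ^ n \<Longrightarrow>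
      norm (Hs w r y - Hs w r y') \<le> 2 * Bd r \<rho> * \<rho> ^ n"
      using Hs_level[OF ok, of n] by blast
    have pos: "0 \<le> 2 * Bd r \<rho> * \<rho> ^ n" using ok Bd_ge1[OF ok] by (simp add: wt_ok_def)
    show ?thesis
    proof (cases "b \<le> (real j + 1) / real r ^ n")
      case True
      then have "norm (Hs w r a - Hs w r b) \<le> 2 * Bd r \<rho> * \<rho> ^ n"
        using ab ja by (intro lev[of a b j]) auto
      moreover have "4 * Bd r \<rho> * \<rho> ^ n = 2 * (2 * Bd r \<rho> * \<rho> ^ n)" by simp
      ultimately show ?thesis using pos by linarith
    next
      case False
      define m where "m = (real j + 1) / real r ^ n"
      have m: "a \<le> m" "m \<le> b" using ja False by (auto simp: m_def)
      have m2: "m = real (Suc j) / real r ^ n" "(real (Suc j) + 1) / real r ^ n = (real j + 2) / real r ^ n"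
        by (simp_all add: m_def)
      have n1: "norm (Hs w r a - Hs w r m) \<le> 2 * Bd r \<rho> * \<rho> ^ n"
        using ab ja m by (intro lev[of a m j]) (auto simp: m_def)
      have n2: "norm (Hs w r m - Hs w r b) \<le> 2 * Bd r \<rho> * \<rho> ^ n"
      proof -
        have "b \<le> (2 + real j) / real r ^ n" using bj by (simp add: add.commute)
        moreover have "(1 + real j) / real r ^ n \<le> (2 + real j) / real r ^ n"
          using rpos by (intro divide_right_mono) auto
        ultimately show ?thesis
          using ab bj m m2 by (intro lev[of m b "Suc j"]) auto
      qed
      have "norm (Hs w r a - Hs w r b) \<le> norm (Hs w r a - Hs w r m) + norm (Hs w r m - Hs w r b)"
        by (rule norm_diff_triangle_ineq[THEN order.trans[rotated]]) (simp add: algebra_simps)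
      then show ?thesis using n1 n2 by simp
    qed
  qed
  show ?thesis
  proof (cases "y \<le> y'")
    case True then show ?thesis using main[of y y'] y d by auto
  next
    case False then show ?thesis using main[of y' y] y d by (auto simp: norm_minus_commute)
  qed
qed


lemma Hs_holo:
  assumes S: "open S" and r2: "0 < r"
    and hol: "\<And>c. c < r \<Longrightarrow> (\<lambda>z. W z c) holomorphic_on S"
    and ok: "\<And>z. z \<in> S \<Longrightarrow> wt_ok (W z) r \<rho>"
    and rho: "0 \<le> \<rho>" "\<rho> < 1"
  shows "(\<lambda>z. Hs (W z) r y) holomorphic_on S"
proof (cases "1 \<le> y")
  case True
  then show ?thesis by (simp add: Hs_def)
next
  case False
  have eq: "(\<lambda>z. Hs (W z) r y) = (\<lambda>z. suminf (\<lambda>n. hterm (W z) r y n))"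
    using False by (simp add: Hs_def)
  have holt: "(\<lambda>z. hterm (W z) r y n) holomorphic_on S" for n
    unfolding hterm_def Sw_def
    using dig_lt[OF r2] hol
    by (intro holomorphic_intros) (meson lessThan_iff order.strict_trans)+
  have holn: "(\<lambda>z. \<Sum>i<N. hterm (W z) r y i) holomorphic_on S" for N
    by (intro holomorphic_intros holt)
  have ul: "uniform_limit S (\<lambda>N z. \<Sum>i<N. hterm (W z) r y i) (\<lambda>z. suminf (\<lambda>i. hterm (W z) r y i)) sequentially"
    by (rule Weierstrass_m_test[where M="\<lambda>n. real r * \<rho> ^ n"])
       (use norm_hterm ok summable_geo_r rho in auto)
  show ?thesis unfolding eq
  proof (rule holomorphic_uniform_sequence[OF S holn])
    fix x assume "x \<in> S"
    then obtain d where d: "0 < d" "cball x d \<subseteq> S"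
      using S open_contains_cball by blast
    then show "\<exists>d>0. cball x d \<subseteq> S \<and> uniform_limit (cball x d) (\<lambda>N z. \<Sum>i<N. hterm (W z) r y i) (\<lambda>z. suminf (\<lambda>i. hterm (W z) r y i)) sequentially"
      using uniform_limit_on_subset[OF ul] by blast
  qed
qed

lemma Hs_equicont:
  assumes rho: "0 \<le> \<rho>" "\<rho> < 1" and e: "0 < e"
  shows "\<exists>d>0. \<forall>w y y'. wt_ok w r \<rho> \<longrightarrow> 0 \<le> y \<longrightarrow> y \<le> 1 \<longrightarrow> 0 \<le> y' \<longrightarrow> y' \<le> 1 \<longrightarrow>
     \<bar>y - y'\<bar> < d \<longrightarrow> norm (Hs w r y - Hs w r y') < e"
proof (cases "r = 0")
  case True
  then show ?thesis by (auto simp: wt_ok_def intro: exI[of _ 1])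
next
  case False
  have B: "0 < 4 * Bd r \<rho>" using False rho by (simp add: Bd_def)
  obtain n where n: "\<rho> ^ n < e / (4 * Bd r \<rho>)"
    using real_arch_pow_inv[of "e / (4 * Bd r \<rho>)" \<rho>] e B rho by auto
  have n': "4 * Bd r \<rho> * \<rho> ^ n < e" using n B by (simp add: field_simps)
  show ?thesis
  proof (intro exI[of _ "1 / real r ^ n"] conjI allI impI)
    show "0 < 1 / real r ^ n" using False by simp
    fix w y y'
    assume "wt_ok w r \<rho>" "0 \<le> y" "y \<le> 1" "0 \<le> y'" "y' \<le> 1" "\<bar>y - y'\<bar> < 1 / real r ^ n"
    then have "norm (Hs w r y - Hs w r y') \<le> 4 * Bd r \<rho> * \<rho> ^ n"
      by (intro Hs_near) auto
    then show "norm (Hs w r y - Hs w r y') < e" using n' by simp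
  qed
qed

lemma deriv_cont_param:
  fixes G :: "real \<Rightarrow> complex \<Rightarrow> complex"
  assumes S: "open S" and R: "0 < R" "cball z0 R \<subseteq> S"
    and hol: "\<And>y. y \<in> {0..1} \<Longrightarrow> G y holomorphic_on S"
    and eqc: "\<And>e. 0 < e \<Longrightarrow> \<exists>d>0. \<forall>y\<in>{0..1}. \<forall>y'\<in>{0..1}. \<bar>y - y'\<bar> < d \<longrightarrow> (\<forall>z\<in>S. norm (G y z - G y' z) < e)"
    and k: "0 < k"
  shows "continuous_on {0..1} (\<lambda>y. (deriv ^^ k) (G y) z0)"
  unfolding continuous_on_iff
proof (intro ballI allI impI)
  fix x e :: real assume x: "x \<in> {0..1}" and e: "0 < e"
  define \<epsilon> where "\<epsilon> = e * R ^ k / fact k / 2"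
  have ep: "0 < \<epsilon>" using e R by (simp add: \<epsilon>_def)
  obtain d where d: "0 < d" "\<forall>y\<in>{0..1}. \<forall>y'\<in>{0..1}. \<bar>y - y'\<bar> < d \<longrightarrow> (\<forall>z\<in>S. norm (G y z - G y' z) < \<epsilon>)"
    using eqc[OF ep] by blast
  show "\<exists>d>0. \<forall>x'\<in>{0..1}. dist x' x < d \<longrightarrow> dist ((deriv ^^ k) (G x') z0) ((deriv ^^ k) (G x) z0) < e"
  proof (intro exI[of _ d] conjI ballI impI)
    show "0 < d" by fact
    fix x' assume x': "x' \<in> {0..1}" and dx: "dist x' x < d"
    define f where "f = (\<lambda>z. G x' z - G x z)"
    have z0: "z0 \<in> S" using R by auto
    have holf: "f holomorphic_on S" unfolding f_def using hol x x' by (intro holomorphic_intros) auto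
    have bnd: "norm ((deriv ^^ k) f z0) \<le> fact k * \<epsilon> / R ^ k"
    proof (rule Cauchy_higher_deriv_bound[where y=0])
      show "f holomorphic_on ball z0 R" using holf R ball_subset_cball by (meson holomorphic_on_subset order.trans)
      show "continuous_on (cball z0 R) f" using holf R holomorphic_on_imp_continuous_on continuous_on_subset by blast
      fix w assume "w \<in> ball z0 R"
      then have "w \<in> S" using R by auto
      then show "f w \<in> ball 0 \<epsilon>" using d(2) x x' dx by (auto simp: f_def dist_real_def)
    qed (use R k in auto)
    have "(deriv ^^ k) f z0 = (deriv ^^ k) (G x') z0 - (deriv ^^ k) (G x) z0"
      unfolding f_def using hol x x' S z0 by (intro higher_deriv_diff) auto
    moreover have "fact k * \<epsilon> / R ^ k < e" using e R by (simp add: \<epsilon>_def)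
    ultimately show "dist ((deriv ^^ k) (G x') z0) ((deriv ^^ k) (G x) z0) < e"
      using bnd by (simp add: dist_norm)
  qed
qed


definition valr :: "nat \<Rightarrow> nat stream \<Rightarrow> real" where
  "valr r \<omega> = (\<Sum>i. real (\<omega> !! i) / real r ^ Suc i)"

definition Fm :: "nat \<Rightarrow> (nat \<Rightarrow> real) \<Rightarrow> real \<Rightarrow> real" where
  "Fm r p y = measure (stream_space (measure_pmf (embed_pmf p)))
     {\<omega> \<in> space (stream_space (measure_pmf (embed_pmf p))). valr r \<omega> \<le> y}"

definition pok :: "nat \<Rightarrow> (nat \<Rightarrow> real) \<Rightarrow> bool" where
  "pok r p \<longleftrightarrow> 2 \<le> r \<and> (\<forall>c. 0 \<le> p c) \<and> (\<forall>c. r \<le> c \<longrightarrow> p c = 0) \<and> (\<Sum>c<r. p c) = 1"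

lemma pok_nn: "pok r p \<Longrightarrow> (\<integral>\<^sup>+x. ennreal (p x) \<partial>count_space UNIV) = 1"
proof -
  assume ok: "pok r p"
  have "(\<integral>\<^sup>+x. ennreal (p x) \<partial>count_space UNIV) = (\<Sum>x<r. ennreal (p x))"
    using ok by (intro nn_integral_count_space') (auto simp: pok_def)
  also have "\<dots> = ennreal (\<Sum>x<r. p x)" using ok by (intro sum_ennreal) (auto simp: pok_def)
  also have "\<dots> = 1" using ok by (simp add: pok_def)
  finally show ?thesis .
qed

lemma pmf_embed: "pok r p \<Longrightarrow> pmf (embed_pmf p) c = p c"
  by (rule pmf_embed_pmf) (auto simp: pok_def pok_nn)

lemma set_pmf_embed: "pok r p \<Longrightarrow> set_pmf (embed_pmf p) \<subseteq> {..<r}"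
  using set_embed_pmf[of p] pok_nn[of r p] by (auto simp: pok_def not_less)

lemma valr_facts:
  assumes r: "1 < r" and dg: "\<forall>i. \<omega> !! i < r"
  shows "summable (\<lambda>i. real (\<omega> !! i) / real r ^ Suc i)" "0 \<le> valr r \<omega>" "valr r \<omega> \<le> 1"
proof -
  have b: "real (\<omega> !! i) / real r ^ Suc i \<le> (real r - 1) * (1 / real r) * (1 / real r) ^ i" for i
  proof -
    have "real (\<omega> !! i) \<le> real r - 1" using dg[rule_format, of i] by linarith
    then have "real (\<omega> !! i) / real r ^ Suc i \<le> (real r - 1) / real r ^ Suc i"
      using r by (intro divide_right_mono) auto
    then show ?thesis by (simp add: power_divide field_simps)
  qed
  have r1: "1 / real r < 1" using r by simp
  have sg: "summable (\<lambda>i. (real r - 1) * (1 / real r) * (1 / real r) ^ i)"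
    using r1 by (intro summable_mult summable_geometric) simp
  show s: "summable (\<lambda>i. real (\<omega> !! i) / real r ^ Suc i)"
    by (rule summable_comparison_test[OF _ sg]) (use b in auto)
  show "0 \<le> valr r \<omega>" unfolding valr_def by (intro suminf_nonneg s) auto
  have "valr r \<omega> \<le> (\<Sum>i. (real r - 1) * (1 / real r) * (1 / real r) ^ i)"
    unfolding valr_def by (rule suminf_le[OF b s sg])
  also have "\<dots> = (real r - 1) * (1 / real r) * (\<Sum>i. (1 / real r) ^ i)"
    by (rule suminf_mult) (use r1 in auto)
  also have "\<dots> = (real r - 1) * (1 / real r) * (1 / (1 - 1 / real r))"
    by (subst suminf_geometric) (use r1 in auto)
  also have "\<dots> = 1"
    using r by (simp add: field_simps)
  finally show "valr r \<omega> \<le> 1" .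
qed

lemma valr_Stream:
  assumes r: "1 < r" and dg: "\<forall>i. \<omega> !! i < r"
  shows "valr r (t ## \<omega>) = real t / real r + valr r \<omega> / real r"
proof -
  define f where "f = (\<lambda>i. real ((t ## \<omega>) !! i) / real r ^ Suc i)"
  have s: "summable (\<lambda>i. real (\<omega> !! i) / real r ^ Suc i)" using valr_facts[OF r dg] by simp
  have fs: "f (Suc i) = (1 / real r) * (real (\<omega> !! i) / real r ^ Suc i)" for i
    by (simp add: f_def)
  have sf: "summable (\<lambda>i. f (Suc i))" unfolding fs using s by (rule summable_mult)
  then have sf': "summable f" by (simp add: summable_Suc_iff)
  have "(\<Sum>i. f (Suc i)) = suminf f - f 0" by (rule suminf_split_head[OF sf'])
  moreover have "(\<Sum>i. f (Suc i)) = (1 / real r) * valr r \<omega>"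
    unfolding fs valr_def by (rule suminf_mult[OF s])
  ultimately have sf: "suminf f = f 0 + (1 / real r) * valr r \<omega>" by simp
  have v: "valr r (t ## \<omega>) = suminf f" unfolding valr_def f_def ..
  have f0: "f 0 = real t / real r" by (simp add: f_def)
  show ?thesis using v f0 sf by simp
qed

context
  fixes r p
  assumes ok: "pok r p"
begin

abbreviation "\<mu> \<equiv> measure_pmf (embed_pmf p)"
abbreviation "SM \<equiv> stream_space \<mu>"

lemma SM_prob: "prob_space SM"
  by (rule prob_space.prob_space_stream_space) (rule prob_space_measure_pmf)

lemma meas_set: "{\<omega> \<in> space SM. valr r \<omega> \<le> y} \<in> sets SM"
  unfolding valr_def by measurable

lemma meas_set2: "{\<omega> \<in> space SM. valr r (t ## \<omega>) \<le> y} \<in> sets SM"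
  unfolding valr_def by measurable

lemma AE_dig: "AE \<omega> in SM. \<forall>i. \<omega> !! i < r"
proof -
  have "AE \<omega> in SM. stream_all (\<lambda>x. x < r) \<omega>"
  proof (rule prob_space.AE_stream_all[OF prob_space_measure_pmf])
    show "AE x in \<mu>. x < r" using set_pmf_embed[OF ok] by (auto simp: AE_measure_pmf_iff)
  qed simp
  then show ?thesis by eventually_elim (auto simp: sset_range)
qed

lemma r0: "0 < r" using ok by (simp add: pok_def)
lemma r1: "1 < r" using ok by (simp add: pok_def)

lemma Fm_ge1: "1 \<le> z \<Longrightarrow> Fm r p z = 1"
proof -
  assume z: "1 \<le> z"
  interpret P: prob_space SM by (rule SM_prob)
  have "Fm r p z = measure SM (space SM)"
    unfolding Fm_def
  proof (rule measure_eq_AE)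
    show "AE \<omega> in SM. (\<omega> \<in> {\<omega> \<in> space SM. valr r \<omega> \<le> z}) = (\<omega> \<in> space SM)"
    proof -
      have vz: "\<And>\<omega>. \<forall>i. \<omega> !! i < r \<Longrightarrow> valr r \<omega> \<le> z"
        using valr_facts(3)[OF r1] z by (meson order.trans)
      show ?thesis using AE_dig by eventually_elim (use vz in auto)
    qed
  qed (use meas_set in auto)
  then show ?thesis by (simp add: P.prob_space)
qed

lemma Fm_neg: "z < 0 \<Longrightarrow> Fm r p z = 0"
proof -
  assume z: "z < 0"
  have "Fm r p z = measure SM {}"
    unfolding Fm_def
  proof (rule measure_eq_AE)
    show "AE \<omega> in SM. (\<omega> \<in> {\<omega> \<in> space SM. valr r \<omega> \<le> z}) = (\<omega> \<in> {})"
      using AE_dig by eventually_elim (use valr_facts[OF r1] z in force)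
  qed (use meas_set in auto)
  then show ?thesis by simp
qed

lemma Fm_Stream: "t < r \<Longrightarrow> measure SM {\<omega> \<in> space SM. valr r (t ## \<omega>) \<le> y} = Fm r p (real r * y - real t)"
proof -
  assume t: "t < r"
  have eq: "valr r (t ## \<omega>) \<le> y \<longleftrightarrow> valr r \<omega> \<le> real r * y - real t" if "\<forall>i. \<omega> !! i < r" for \<omega>
  proof -
    have "valr r (t ## \<omega>) = (real t + valr r \<omega>) / real r"
      using valr_Stream[OF r1 that, of t] by (simp add: add_divide_distrib)
    then have "valr r (t ## \<omega>) \<le> y \<longleftrightarrow> real t + valr r \<omega> \<le> y * real r"
      using r0 by (simp add: pos_divide_le_eq)
    then show ?thesis by (simp add: algebra_simps)
  qed
  show ?thesis
    unfolding Fm_def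
  proof (rule measure_eq_AE)
    show "AE \<omega> in SM. (\<omega> \<in> {\<omega> \<in> space SM. valr r (t ## \<omega>) \<le> y}) = (\<omega> \<in> {\<omega> \<in> space SM. valr r \<omega> \<le> real r * y - real t})"
      using AE_dig by eventually_elim (use eq in auto)
  qed (use meas_set meas_set2 in auto)
qed

lemma Fm_nonneg: "0 \<le> Fm r p y" by (simp add: Fm_def)

lemma Fm_rec:
  assumes y: "0 \<le> y" "y < 1"
  shows "Fm r p y = (\<Sum>t<dig r 0 y. p t) + p (dig r 0 y) * Fm r p (real r * y - real (dig r 0 y))"
proof -
  interpret P: prob_space SM by (rule SM_prob)
  define c where "c = dig r 0 y"
  have c1: "real c \<le> real r * y" "real r * y < real c + 1" using dig0[OF y r0] by (auto simp: c_def)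
  have cr: "c < r" using dig_lt[OF r0] by (simp add: c_def)
  have "ennreal (Fm r p y) = (\<integral>\<^sup>+t. ennreal (measure SM {\<omega> \<in> space SM. valr r (t ## \<omega>) \<le> y}) \<partial>\<mu>)"
    unfolding Fm_def using prob_space.prob_stream_space[OF prob_space_measure_pmf meas_set] by simp
  also have "\<dots> = (\<Sum>t<r. ennreal (measure SM {\<omega> \<in> space SM. valr r (t ## \<omega>) \<le> y}) * pmf (embed_pmf p) t)"
    by (rule nn_integral_measure_pmf_support) (use set_pmf_embed[OF ok] in auto)
  also have "\<dots> = (\<Sum>t<r. ennreal (Fm r p (real r * y - real t) * p t))"
    using Fm_Stream pmf_embed[OF ok] ok by (intro sum.cong) (auto simp: pok_def ennreal_mult Fm_nonneg)
  also have "\<dots> = ennreal (\<Sum>t<r. Fm r p (real r * y - real t) * p t)"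
    using ok Fm_nonneg by (intro sum_ennreal) (auto simp: pok_def)
  finally have E: "Fm r p y = (\<Sum>t<r. Fm r p (real r * y - real t) * p t)"
    using ok Fm_nonneg by (subst (asm) ennreal_inj) (auto simp: pok_def intro!: sum_nonneg)
  have "(\<Sum>t<r. Fm r p (real r * y - real t) * p t) =
        (\<Sum>t\<in>{0..<Suc c}. Fm r p (real r * y - real t) * p t) + (\<Sum>t\<in>{Suc c..<r}. Fm r p (real r * y - real t) * p t)"
    unfolding lessThan_atLeast0 by (rule sum.atLeastLessThan_concat[symmetric]) (use cr in auto)
  also have "(\<Sum>t\<in>{Suc c..<r}. Fm r p (real r * y - real t) * p t) = 0"
  proof (intro sum.neutral ballI)
    fix t assume "t \<in> {Suc c..<r}"
    then have "real r * y - real t < 0" using c1 by auto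
    then show "Fm r p (real r * y - real t) * p t = 0" by (simp add: Fm_neg)
  qed
  also have "(\<Sum>t\<in>{0..<Suc c}. Fm r p (real r * y - real t) * p t) = (\<Sum>t<c. p t) + p c * Fm r p (real r * y - real c)"
  proof -
    have "(\<Sum>t\<in>{0..<Suc c}. Fm r p (real r * y - real t) * p t) = (\<Sum>t<c. Fm r p (real r * y - real t) * p t) + Fm r p (real r * y - real c) * p c"
      by (simp add: atLeast0LessThan)
    also have "(\<Sum>t<c. Fm r p (real r * y - real t) * p t) = (\<Sum>t<c. p t)"
    proof (intro sum.cong refl)
      fix t assume "t \<in> {..<c}"
      then have "1 \<le> real r * y - real t" using c1 by auto
      then show "Fm r p (real r * y - real t) * p t = p t" by (simp add: Fm_ge1)
    qed
    finally show ?thesis by simp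
  qed
  finally show ?thesis using E by (simp add: c_def)
qed

lemma Fm_le1: "Fm r p y \<le> 1"
proof -
  interpret P: prob_space SM by (rule SM_prob)
  show ?thesis unfolding Fm_def by simp
qed

lemma Fm_mono: "y \<le> y' \<Longrightarrow> Fm r p y \<le> Fm r p y'"
proof -
  assume yy: "y \<le> y'"
  interpret P: prob_space SM by (rule SM_prob)
  show ?thesis unfolding Fm_def
    by (rule P.finite_measure_mono) (use yy meas_set in auto)
qed

lemma Fm_Hs:
  assumes wok: "wt_ok (\<lambda>c. complex_of_real (p c)) r \<rho>" and y: "0 \<le> y" "y \<le> 1"
  shows "Fm r p y = Re (Hs (\<lambda>c. complex_of_real (p c)) r y)"
proof -
  define w where "w = (\<lambda>c. complex_of_real (p c))"
  define D where "D = (\<lambda>y. Fm r p y - Re (Hs w r y))"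
  define K where "K = 1 + Bd r \<rho>"
  have rho: "0 \<le> \<rho>" "\<rho> < 1" and pr: "\<And>c. c < r \<Longrightarrow> \<bar>p c\<bar> \<le> \<rho>"
    using wok by (auto simp: wt_ok_def)
  have D1: "D 1 = 0" by (simp add: D_def Fm_ge1 Hs_def)
  have Dbound: "\<bar>D y\<bar> \<le> K" for y
  proof -
    have "\<bar>Re (Hs w r y)\<bar> \<le> Bd r \<rho>" using norm_Hs[OF wok[folded w_def], of y] abs_Re_le_cmod order.trans by blast
    then show ?thesis using Fm_nonneg[of y] Fm_le1[of y] by (simp add: D_def K_def abs_if split: if_splits)
  qed
  have Drec: "D y = p (dig r 0 y) * D (real r * y - real (dig r 0 y))" if "0 \<le> y" "y < 1" for y
  proof -
    have h: "Hs w r y = Sw w (dig r 0 y) + w (dig r 0 y) * Hs w r (real r * y - real (dig r 0 y))"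
      by (rule Hs_rec[OF wok[folded w_def] that])
    have "Re (Sw w (dig r 0 y)) = (\<Sum>t<dig r 0 y. p t)" by (simp add: Sw_def w_def)
    then show ?thesis using h Fm_rec[OF that] by (simp add: D_def w_def algebra_simps)
  qed
  have ind: "\<forall>y. 0 \<le> y \<and> y \<le> 1 \<longrightarrow> \<bar>D y\<bar> \<le> K * \<rho> ^ n" for n
  proof (induction n)
    case 0 then show ?case using Dbound by simp
  next
    case (Suc n)
    show ?case
    proof (intro allI impI)
      fix y :: real assume yy: "0 \<le> y \<and> y \<le> 1"
      show "\<bar>D y\<bar> \<le> K * \<rho> ^ Suc n"
      proof (cases "y = 1")
        case True then show ?thesis using D1 rho by (simp add: K_def Bd_def)
      next
        case False
        then have y1: "y < 1" using yy by simp
        have c1: "real (dig r 0 y) \<le> real r * y" "real r * y < real (dig r 0 y) + 1"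
          using dig0[OF _ y1 r0] yy by auto
        have "\<bar>D y\<bar> = \<bar>p (dig r 0 y)\<bar> * \<bar>D (real r * y - real (dig r 0 y))\<bar>"
          using Drec[OF _ y1] yy by (simp add: abs_mult)
        also have "\<dots> \<le> \<rho> * (K * \<rho> ^ n)"
          using pr[OF dig_lt[OF r0]] Suc.IH c1 rho by (intro mult_mono) auto
        finally show ?thesis by (simp add: algebra_simps)
      qed
    qed
  qed
  have "D y = 0"
  proof (rule ccontr)
    assume "D y \<noteq> 0"
    then have pos: "0 < \<bar>D y\<bar> / K" using Bd_ge1[OF wok] by (simp add: K_def)
    obtain n where "\<rho> ^ n < \<bar>D y\<bar> / K" using real_arch_pow_inv[OF pos rho(2)] by blast
    then have "K * \<rho> ^ n < \<bar>D y\<bar>" using Bd_ge1[OF wok] by (simp add: K_def field_simps)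
    then show False using ind[of n] y by force
  qed
  then show ?thesis by (simp add: D_def w_def)
qed

end


lemma real_higher_deriv:
  fixes G :: "complex \<Rightarrow> complex" and \<phi> :: "real \<Rightarrow> real"
  assumes hol: "G holomorphic_on V" and V: "open V"
    and I: "open I" "\<And>s. s \<in> I \<Longrightarrow> complex_of_real s \<in> V"
    and phi: "\<And>s. s \<in> I \<Longrightarrow> \<phi> s = Re (G (complex_of_real s))"
  shows "\<forall>s\<in>I. (deriv ^^ k) \<phi> s = Re ((deriv ^^ k) G (complex_of_real s)) \<and>
           ((deriv ^^ k) \<phi> has_real_derivative Re ((deriv ^^ Suc k) G (complex_of_real s))) (at s)"
proof (induction k)
  have der: "((\<lambda>t. Re ((deriv ^^ k) G (complex_of_real t))) has_real_derivative Re ((deriv ^^ Suc k) G (complex_of_real s))) (at s)"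
    if s: "s \<in> I" for s k
  proof -
    have "((deriv ^^ k) G has_field_derivative deriv ((deriv ^^ k) G) (complex_of_real s)) (at (complex_of_real s))"
      using holomorphic_higher_deriv[OF hol V] V I(2)[OF s] by (rule holomorphic_derivI)
    then have "((\<lambda>t. (deriv ^^ k) G (complex_of_real t)) has_vector_derivative deriv ((deriv ^^ k) G) (complex_of_real s)) (at s)"
      by (rule has_vector_derivative_real_field)
    then have "((\<lambda>t. Re ((deriv ^^ k) G (complex_of_real t))) has_real_derivative Re (deriv ((deriv ^^ k) G) (complex_of_real s))) (at s)"
      by (rule has_field_derivative_Re)
    then show ?thesis by simp
  qed
  {
    case 0
    show ?case
    proof
      fix s assume s: "s \<in> I"
      have "(\<phi> has_real_derivative Re ((deriv ^^ Suc 0) G (complex_of_real s))) (at s)"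
        by (rule has_field_derivative_transform_within_open[OF der[OF s, of 0] I(1) s]) (use phi in simp)
      then show "(deriv ^^ 0) \<phi> s = Re ((deriv ^^ 0) G (complex_of_real s)) \<and>
           ((deriv ^^ 0) \<phi> has_real_derivative Re ((deriv ^^ Suc 0) G (complex_of_real s))) (at s)"
        using phi[OF s] by simp
    qed
  next
    case (Suc k)
    show ?case
    proof
      fix s assume s: "s \<in> I"
      have e1: "(deriv ^^ Suc k) \<phi> s' = Re ((deriv ^^ Suc k) G (complex_of_real s'))" if "s' \<in> I" for s'
        using Suc.IH that DERIV_imp_deriv by fastforce
      have "((deriv ^^ Suc k) \<phi> has_real_derivative Re ((deriv ^^ Suc (Suc k)) G (complex_of_real s))) (at s)"
        by (rule has_field_derivative_transform_within_open[OF der[OF s, of "Suc k"] I(1) s]) (use e1 in simp)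
      then show "(deriv ^^ Suc k) \<phi> s = Re ((deriv ^^ Suc k) G (complex_of_real s)) \<and>
           ((deriv ^^ Suc k) \<phi> has_real_derivative Re ((deriv ^^ Suc (Suc k)) G (complex_of_real s))) (at s)"
        using e1[OF s] by simp
    qed
  }
qed

lemma Hs_cong:
  assumes "0 < r" "\<And>c. c < r \<Longrightarrow> w c = w' c"
  shows "Hs w r y = Hs w' r y"
proof -
  have "hterm w r y n = hterm w' r y n" for n
    unfolding hterm_def Sw_def using assms dig_lt[OF assms(1)]
    by (intro arg_cong2[where f="(*)"] prod.cong sum.cong) (auto, meson lessThan_iff order.strict_trans)
  then have "hterm w r y = hterm w' r y" by auto
  then show ?thesis by (simp add: Hs_def)
qed

lemma Hs_strict:
  assumes ok: "wt_ok w r \<rho>" and pos: "\<And>c. c < r \<Longrightarrow> w c = complex_of_real (pw c) \<and> 0 < pw c"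
  shows "\<forall>j. j + 1 \<le> r ^ n \<longrightarrow> 0 < Re (Hs w r ((real j + 1) / real r ^ n) - Hs w r (real j / real r ^ n))"
proof (induction n)
  case 0
  show ?case
  proof (intro allI impI)
    fix j :: nat assume "j + 1 \<le> r ^ 0"
    then have j0: "j = 0" by simp
    have "Hs w r 1 = 1" by (simp add: Hs_def)
    then show "0 < Re (Hs w r ((real j + 1) / real r ^ 0) - Hs w r (real j / real r ^ 0))"
      using j0 Hs_zero[of w r] by simp
  qed
next
  case (Suc n)
  have r0: "0 < r" using ok by (simp add: wt_ok_def)
  have rpos: "0 < real r ^ n" using r0 by simp
  show ?case
  proof (intro allI impI)
    fix j assume jr: "j + 1 \<le> r ^ Suc n"
    define c where "c = j div r ^ n"
    define j' where "j' = j mod r ^ n"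
    have jeq: "j = c * r ^ n + j'" using div_mult_mod_eq[of j "r ^ n"] by (simp add: c_def j'_def)
    have j'lt: "j' < r ^ n" using r0 by (simp add: j'_def)
    have clt: "c < r" using jr r0 by (simp add: c_def less_mult_imp_div_less mult.commute)
    have j'le: "real j' + 1 \<le> real r ^ n" using j'lt
      by (metis Suc_leI of_nat_Suc of_nat_le_iff of_nat_power add.commute)
    have jrr: "real j = real c * real r ^ n + real j'" using jeq by simp
    have key: "real c / real r \<le> z \<and> z \<le> (real c + 1) / real r \<and> real r * z - real c = (real j' + x) / real r ^ n"
      if z: "z = (real j + x) / real r ^ Suc n" "0 \<le> x" "x \<le> 1" for z x
    proof -
      have zz: "z * (real r * real r ^ n) = real c * real r ^ n + real j' + x"
        using z r0 rpos jrr by (simp add: field_simps)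
      have "real c * real r ^ n \<le> z * real r * real r ^ n" using zz z by (simp add: algebra_simps)
      then have a: "real c \<le> z * real r" using rpos by simp
      have "z * real r * real r ^ n \<le> (real c + 1) * real r ^ n" using zz z j'le by (simp add: algebra_simps)
      then have b: "z * real r \<le> real c + 1" using rpos by simp
      have "(real r * z - real c) * real r ^ n = real j' + x" using zz by (simp add: algebra_simps)
      then have "real r * z - real c = (real j' + x) / real r ^ n" using rpos by (simp add: field_simps)
      then show ?thesis using a b r0 by (simp add: field_simps)
    qed
    have k0: "real c / real r \<le> real j / real r ^ Suc n \<and> real j / real r ^ Suc n \<le> (real c + 1) / real r \<and>
       real r * (real j / real r ^ Suc n) - real c = real j' / real r ^ n"
      using key[of "real j / real r ^ Suc n" 0] by simp
    have k1: "real c / real r \<le> (real j + 1) / real r ^ Suc n \<and> (real j + 1) / real r ^ Suc n \<le> (real c + 1) / real r \<and>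
       real r * ((real j + 1) / real r ^ Suc n) - real c = (real j' + 1) / real r ^ n"
      using key[of "(real j + 1) / real r ^ Suc n" 1] by simp
    have "Hs w r ((real j + 1) / real r ^ Suc n) - Hs w r (real j / real r ^ Suc n) =
        w c * (Hs w r ((real j' + 1) / real r ^ n) - Hs w r (real j' / real r ^ n))"
      using Hs_rec_closed[OF ok clt] k0 k1 by (simp add: algebra_simps)
    moreover have "0 < Re (Hs w r ((real j' + 1) / real r ^ n) - Hs w r (real j' / real r ^ n))"
      using Suc.IH j'lt by simp
    ultimately show "0 < Re (Hs w r ((real j + 1) / real r ^ Suc n) - Hs w r (real j / real r ^ Suc n))"
      using pos[OF clt] by simp
  qed
qed


definition Pg :: "(nat \<Rightarrow> nat) \<Rightarrow> nat \<Rightarrow> 'a::comm_ring_1 \<Rightarrow> 'a" where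
  "Pg a d u = (\<Sum>j\<le>d. of_nat (a j) * u ^ j)"

definition Wc :: "(nat \<Rightarrow> nat) \<Rightarrow> nat \<Rightarrow> (nat \<Rightarrow> nat) \<Rightarrow> complex \<Rightarrow> nat \<Rightarrow> complex" where
  "Wc a d tau u c = u ^ tau c / Pg a d u"

lemma Pg_of_real: "Pg a d (complex_of_real u) = complex_of_real (Pg a d u)"
  by (simp add: Pg_def)

lemma Pg_cnj: "cnj (Pg a d u) = Pg a d (cnj u)"
  by (simp add: Pg_def cnj_sum)

lemma Pg_deriv: "((\<lambda>u::'a::{comm_ring_1,real_normed_field}. Pg a d u) has_field_derivative
    (\<Sum>j\<le>d. of_nat (a j) * (of_nat j * u ^ (j - 1)))) (at u)"
  unfolding Pg_def by (intro derivative_eq_intros) auto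

lemma Pg_cont: "continuous_on UNIV (\<lambda>u::'a::{comm_ring_1,real_normed_field}. Pg a d u)"
  unfolding Pg_def by (intro continuous_intros)

context
  fixes a d tau
  assumes d1: "d \<ge> 1"
    and apos: "\<forall>j\<le>d. a j > 0"
    and tauc: "\<forall>i < rdig a d. tau i \<le> d"
    and card: "\<forall>j\<le>d. card {i. i < rdig a d \<and> tau i = j} = a j"
begin

lemma fiber: "(\<Sum>c<rdig a d. (u::'a::comm_ring_1) ^ tau c) = Pg a d u"
proof -
  have "(\<Sum>j\<in>{..d}. \<Sum>c\<in>{x \<in> {..<rdig a d}. tau x = j}. u ^ tau c) = (\<Sum>c<rdig a d. u ^ tau c)"
    by (rule sum.group) (use tauc in auto)
  moreover have "(\<Sum>c\<in>{x \<in> {..<rdig a d}. tau x = j}. u ^ tau c) = of_nat (a j) * u ^ j" if "j \<le> d" for j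
  proof -
    have "(\<Sum>c\<in>{x \<in> {..<rdig a d}. tau x = j}. u ^ tau c) = (\<Sum>c\<in>{x \<in> {..<rdig a d}. tau x = j}. u ^ j)"
      by (rule sum.cong) auto
    also have "\<dots> = of_nat (card {x \<in> {..<rdig a d}. tau x = j}) * u ^ j" by simp
    also have "card {x \<in> {..<rdig a d}. tau x = j} = a j" using card that by simp
    finally show ?thesis .
  qed
  ultimately show ?thesis unfolding Pg_def by simp
qed

lemma r2: "2 \<le> rdig a d"
proof -
  have "(\<Sum>j\<in>{0, 1}. a j) \<le> (\<Sum>j\<le>d. a j)"
    by (rule sum_mono2) (use d1 in auto)
  moreover have "1 \<le> a 0" "1 \<le> a 1" using apos d1 by (auto simp: Suc_le_eq)
  ultimately show ?thesis unfolding rdig_def by simp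
qed

lemma Sw_Wc: "Pg a d u \<noteq> 0 \<Longrightarrow> Sw (Wc a d tau u) (rdig a d) = 1"
  unfolding Sw_def Wc_def by (simp add: sum_divide_distrib[symmetric] fiber)

lemma Pg_ge: "0 \<le> (u::real) \<Longrightarrow> 1 + u \<le> Pg a d u"
proof -
  assume u: "0 \<le> u"
  have "(\<Sum>j\<in>{0, 1}. real (a j) * u ^ j) \<le> (\<Sum>j\<le>d. real (a j) * u ^ j)"
    by (rule sum_mono2) (use d1 u in auto)
  moreover have "1 + u \<le> (\<Sum>j\<in>{0, 1}. real (a j) * u ^ j)"
  proof -
    have "1 \<le> real (a 0)" "1 \<le> real (a 1)" using apos d1 by (auto simp: Suc_le_eq)
    then have "u \<le> real (a 1) * u" using u by (simp add: mult_le_cancel_right1)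
    then show ?thesis using \<open>1 \<le> real (a 0)\<close> by simp
  qed
  ultimately show ?thesis by (simp add: Pg_def)
qed

lemma Pg_mono: "0 \<le> (u::real) \<Longrightarrow> u < v \<Longrightarrow> Pg a d u < Pg a d v"
  unfolding Pg_def
proof (rule sum_strict_mono_ex1)
  assume u: "0 \<le> u" and uv: "u < v"
  show "\<forall>x\<in>{..d}. real (a x) * u ^ x \<le> real (a x) * v ^ x"
    using u uv by (auto intro!: mult_left_mono power_mono)
  show "\<exists>x\<in>{..d}. real (a x) * u ^ x < real (a x) * v ^ x"
    using d1 apos uv by (intro bexI[of _ 1]) auto
qed simp

lemma Pg_pos: "0 \<le> (u::real) \<Longrightarrow> 0 < Pg a d u"
  using Pg_ge[of u] by simp

lemma tq_eq:
  assumes s: "0 < s" and u: "0 < u" and P: "Pg a d u = 1 / s"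
  shows "tq a d s = s * u"
proof -
  have expand: "(\<Sum>j\<le>d. real (a j) * s ^ (d - j) * t ^ j) = s ^ d * Pg a d (t / s)" for t
    unfolding Pg_def sum_distrib_left
  proof (rule sum.cong[OF refl])
    fix j assume "j \<in> {..d}"
    then have "s ^ d = s ^ (d - j) * s ^ j" by (simp add: power_add[symmetric])
    then show "real (a j) * s ^ (d - j) * t ^ j = s ^ d * (real (a j) * (t / s) ^ j)"
      using s by (simp add: power_divide field_simps)
  qed
  have sd: "s ^ d = s * s ^ (d - 1)" using d1 by (metis Suc_diff_1 less_le_trans power_Suc zero_less_one)
  have eqn: "(\<Sum>j\<le>d. real (a j) * s ^ (d - j) * t ^ j) = s ^ (d - 1) \<longleftrightarrow> Pg a d (t / s) = 1 / s" for t
    unfolding expand sd using s by (auto simp: field_simps)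
  have su: "s * u < 1"
  proof -
    have "u < Pg a d u" using Pg_ge[of u] u by simp
    then have "u < 1 / s" using P by simp
    then show ?thesis using s by (simp add: field_simps)
  qed
  show ?thesis unfolding tq_def
  proof (rule the_equality)
    show "0 < s * u \<and> s * u < 1 \<and> (\<Sum>j\<le>d. real (a j) * s ^ (d - j) * (s * u) ^ j) = s ^ (d - 1)"
      using s u su P eqn[of "s * u"] by simp
    fix t assume t: "0 < t \<and> t < 1 \<and> (\<Sum>j\<le>d. real (a j) * s ^ (d - j) * t ^ j) = s ^ (d - 1)"
    then have Pt: "Pg a d (t / s) = Pg a d u" using eqn[of t] P by simp
    have "t / s = u"
    proof (rule ccontr)
      assume "t / s \<noteq> u"
      then consider "t / s < u" | "u < t / s" by linarith
      then show False
      proof cases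
        case 1 then show False using Pg_mono[of "t / s" u] Pt t s by simp
      next
        case 2 then show False using Pg_mono[of u "t / s"] Pt u by simp
      qed
    qed
    then show "t = s * u" using s by (simp add: field_simps)
  qed
qed

lemma dw_eq:
  assumes s: "0 < s" and u: "0 < u" and P: "Pg a d u = 1 / s" and c: "c < rdig a d"
  shows "digit_weight a d tau s c = u ^ tau c / Pg a d u"
proof -
  have "digit_weight a d tau s c = (s * u) ^ tau c * s / s ^ tau c"
    using c tq_eq[OF s u P] by (simp add: digit_weight_def)
  also have "\<dots> = s * u ^ tau c" using s by (simp add: power_mult_distrib)
  also have "\<dots> = u ^ tau c / Pg a d u" using P s by simp
  finally show ?thesis .
qed

lemma dw_zero: "\<not> c < rdig a d \<Longrightarrow> digit_weight a d tau s c = 0"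
  by (simp add: digit_weight_def)

lemma Wc_real: "Wc a d tau (complex_of_real u) c = complex_of_real (u ^ tau c / Pg a d u)"
  by (simp add: Wc_def Pg_of_real)

lemma weight_lt1:
  assumes u: "0 < (u::real)" and c: "c < rdig a d"
  shows "0 < u ^ tau c / Pg a d u" "u ^ tau c / Pg a d u < 1"
proof -
  have P: "0 < Pg a d u" using Pg_pos[of u] u by simp
  show pos: "0 < u ^ tau c / Pg a d u" using P u by simp
  have "(\<Sum>c<rdig a d. u ^ tau c / Pg a d u) = 1"
    using P by (simp add: sum_divide_distrib[symmetric] fiber)
  moreover have "(\<Sum>c<rdig a d. u ^ tau c / Pg a d u) = u ^ tau c / Pg a d u + (\<Sum>c'\<in>{..<rdig a d} - {c}. u ^ tau c' / Pg a d u)"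
    using c by (subst sum.remove[of _ c]) auto
  moreover have "0 < (\<Sum>c'\<in>{..<rdig a d} - {c}. u ^ tau c' / Pg a d u)"
  proof (rule sum_pos)
    have "(if c = 0 then 1 else 0) \<in> {..<rdig a d} - {c}" using r2 by auto
    then show "{..<rdig a d} - {c} \<noteq> {}" by blast
  qed (use P u in auto)
  ultimately show "u ^ tau c / Pg a d u < 1" by linarith
qed

lemma exists_u0:
  assumes q: "0 < q" "q < 1 / real (a 0)"
  shows "\<exists>u0::real>0. Pg a d u0 = 1 / q"
proof -
  have "(\<Sum>j\<le>d. real (a j) * (0::real) ^ j) = (\<Sum>j\<le>d. if j = 0 then real (a j) else 0)"
    by (rule sum.cong) (auto simp: power_0_left)
  then have P0: "Pg a d (0::real) = real (a 0)" by (simp add: Pg_def)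
  have a0: "0 < real (a 0)" using apos by simp
  then have "real (a 0) * q < 1" using q by (simp add: field_simps)
  then have "real (a 0) \<le> 1 / q" using q by (simp add: field_simps)
  then have "Pg a d (0::real) \<le> 1 / q" using P0 by simp
  moreover have "1 / q \<le> Pg a d (1 / q)" using Pg_ge[of "1 / q"] q by simp
  moreover have "\<forall>x. 0 \<le> x \<and> x \<le> 1 / q \<longrightarrow> isCont (Pg a d) x"
    using Pg_cont continuous_on_eq_continuous_at by blast
  ultimately obtain u0 where u0: "0 \<le> u0" "u0 \<le> 1 / q" "Pg a d u0 = 1 / q"
    using IVT[of "Pg a d" 0 "1 / q" "1 / q"] q by auto
  have "u0 \<noteq> 0" using u0 P0 q by auto
  then show ?thesis using u0 by (intro exI[of _ u0]) auto
qed

end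


lemma Pg_holo: "(\<lambda>u. Pg a d u) holomorphic_on A"
  unfolding Pg_def by (intro holomorphic_intros)

lemma Pg_isCont: "isCont (\<lambda>u::'a::{comm_ring_1,real_normed_field}. Pg a d u) x"
  unfolding Pg_def by (intro continuous_intros)

context
  fixes a d tau q
  assumes d1: "d \<ge> 1"
    and apos: "\<forall>j\<le>d. a j > 0"
    and tauc: "\<forall>i < rdig a d. tau i \<le> d"
    and card: "\<forall>j\<le>d. card {i. i < rdig a d \<and> tau i = j} = a j"
    and q: "0 < q" "q < 1 / real (a 0)"
begin

lemma setup_obj:
  obtains \<rho> V g where "0 \<le> \<rho>" "\<rho> < 1" "open V" "complex_of_real q \<in> V"
   "\<And>c. c < rdig a d \<Longrightarrow> (\<lambda>z. Wc a d tau (g z) c) holomorphic_on V"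
   "\<And>z. z \<in> V \<Longrightarrow> wt_ok (Wc a d tau (g z)) (rdig a d) \<rho>"
   "\<And>s. complex_of_real s \<in> V \<Longrightarrow> (\<exists>u>0. g (complex_of_real s) = complex_of_real u \<and> 0 < s \<and> Pg a d u = 1 / s)"
proof -
  note ctx = d1 apos tauc card
  define r where "r = rdig a d"
  have r2: "2 \<le> r" using r2[OF ctx] by (simp add: r_def)
  obtain u0 :: real where u0: "0 < u0" "Pg a d u0 = 1 / q" using exists_u0[OF ctx q] by blast
  define U0 where "U0 = complex_of_real u0"
  define f where "f = (\<lambda>u::complex. inverse (Pg a d u))"
  define S0 where "S0 = {u::complex. Pg a d u \<noteq> 0}"
  have S0: "open S0" unfolding S0_def by (rule open_Collect_neq) (auto intro: Pg_cont continuous_intros)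
  have holf: "f holomorphic_on S0" unfolding f_def S0_def by (intro holomorphic_intros Pg_holo) auto
  have PU0: "Pg a d U0 = complex_of_real (1 / q)" by (simp add: U0_def Pg_of_real u0)
  have U0S0: "U0 \<in> S0" using PU0 q by (simp add: S0_def)
  define Pd where "Pd = (\<Sum>j\<le>d. of_nat (a j) * (of_nat j * U0 ^ (j - 1)))"
  have Pdr: "Pd = complex_of_real (\<Sum>j\<le>d. real (a j) * (real j * u0 ^ (j - 1)))"
    by (simp add: Pd_def U0_def)
  have "real (a 1) * (real 1 * u0 ^ (1 - 1)) \<le> (\<Sum>j\<le>d. real (a j) * (real j * u0 ^ (j - 1)))"
    by (rule member_le_sum) (use d1 u0 in auto)
  moreover have "0 < real (a 1)" using apos d1 by auto
  ultimately have X: "0 < (\<Sum>j\<le>d. real (a j) * (real j * u0 ^ (j - 1)))" by simp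
  have Pd0: "Pd \<noteq> 0" using Pdr X by (metis of_real_eq_0_iff order_less_irrefl)
  have "(f has_field_derivative - (Pd * inverse (Pg a d U0 ^ Suc (Suc 0)))) (at U0)"
    unfolding f_def Pd_def by (rule DERIV_inverse_fun[OF Pg_deriv]) (use U0S0 in \<open>simp add: S0_def\<close>)
  then have "deriv f U0 = - (Pd * inverse (Pg a d U0 ^ Suc (Suc 0)))" by (rule DERIV_imp_deriv)
  then have df: "deriv f U0 \<noteq> 0" using Pd0 U0S0 by (simp add: S0_def)
  obtain \<delta>0 where \<delta>0: "0 < \<delta>0" "ball U0 \<delta>0 \<subseteq> S0" "inj_on f (ball U0 \<delta>0)"
    using has_complex_derivative_locally_injective[OF holf U0S0 S0 df] by blast
  define m where "m = Max ((\<lambda>c. u0 ^ tau c / Pg a d u0) ` {..<r})"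
  have m1: "m < 1" unfolding m_def using r2 weight_lt1[OF ctx u0(1)] by (subst Max_less_iff) (auto simp: r_def lessThan_empty_iff)
  have m0: "u0 ^ tau c / Pg a d u0 \<le> m" if "c < r" for c
    unfolding m_def using that by (intro Max_ge) auto
  define \<rho> where "\<rho> = (1 + m) / 2"
  have m0': "0 \<le> m"
  proof -
    have "0 < u0 ^ tau 0 / Pg a d u0" using u0 Pg_pos[OF ctx, of u0] by simp
    moreover have "u0 ^ tau 0 / Pg a d u0 \<le> m" using m0[of 0] r2 by simp
    ultimately show ?thesis by linarith
  qed
  have rho: "0 \<le> \<rho>" "\<rho> < 1" "m < \<rho>" using m1 m0' by (auto simp: \<rho>_def)
  have nW: "norm (Wc a d tau U0 c) = u0 ^ tau c / Pg a d u0" for c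
  proof -
    have "0 < u0 ^ tau c / Pg a d u0" using u0 Pg_pos[OF ctx, of u0] by simp
    then show ?thesis unfolding U0_def Wc_real[OF ctx] norm_of_real by (simp only: abs_of_pos)
  qed
  have ev: "eventually (\<lambda>u. \<forall>c\<in>{..<r}. norm (Wc a d tau u c) < \<rho>) (at U0)"
  proof (rule eventually_ball_finite)
    show "\<forall>c\<in>{..<r}. \<forall>\<^sub>F u in at U0. norm (Wc a d tau u c) < \<rho>"
    proof
      fix c assume c: "c \<in> {..<r}"
      have "isCont (\<lambda>u. norm (Wc a d tau u c)) U0"
        unfolding Wc_def using U0S0 by (intro continuous_intros Pg_isCont) (auto simp: S0_def)
      then have "((\<lambda>u. norm (Wc a d tau u c)) \<longlongrightarrow> norm (Wc a d tau U0 c)) (at U0)"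
        by (simp add: isCont_def)
      moreover have "norm (Wc a d tau U0 c) < \<rho>"
        using m0[of c] c rho nW[of c] by simp
      ultimately show "\<forall>\<^sub>F u in at U0. norm (Wc a d tau u c) < \<rho>" by (rule order_tendstoD)
    qed
  qed simp
  obtain \<delta>1 where \<delta>1: "0 < \<delta>1" "\<And>u. u \<noteq> U0 \<Longrightarrow> dist u U0 < \<delta>1 \<Longrightarrow> \<forall>c<r. norm (Wc a d tau u c) < \<rho>"
    using ev unfolding eventually_at by auto
  have wU0: "\<forall>c<r. norm (Wc a d tau U0 c) < \<rho>"
    using m0 rho nW by (metis le_less_trans)
  define \<delta> where "\<delta> = min \<delta>0 (min \<delta>1 u0)"
  have \<delta>: "0 < \<delta>" using \<delta>0 \<delta>1 u0 by (simp add: \<delta>_def)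
  define S where "S = ball U0 \<delta>"
  have SS0: "S \<subseteq> S0" using \<delta>0 by (auto simp: S_def \<delta>_def)
  have Sw: "\<forall>c<r. norm (Wc a d tau u c) \<le> \<rho>" if "u \<in> S" for u
    using \<delta>1(2)[of u] wU0 that by (cases "u = U0") (auto simp: S_def \<delta>_def dist_commute less_imp_le)
  have injS: "inj_on f S" using \<delta>0(3) by (rule inj_on_subset) (auto simp: S_def \<delta>_def)
  have holS: "f holomorphic_on S" using holf SS0 by (rule holomorphic_on_subset)
  obtain g where g: "g holomorphic_on (f ` S)" "\<And>z. z \<in> S \<Longrightarrow> g (f z) = z"
  proof -
    have oS: "open S" by (simp add: S_def)
    show ?thesis using holomorphic_has_inverse[OF holS oS injS] that by metis
  qed
  define V where "V = f ` S"
  have V: "open V" unfolding V_def by (rule open_mapping_thm3[OF holS _ injS]) (simp add: S_def)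
  have fU0: "f U0 = complex_of_real q" using PU0 q by (simp add: f_def)
  have qV: "complex_of_real q \<in> V" using \<delta> fU0 by (auto simp: V_def S_def intro!: image_eqI[of _ _ U0])
  have gV: "g z \<in> S" "f (g z) = z" if "z \<in> V" for z using that g(2) by (auto simp: V_def)
  have holW: "(\<lambda>z. Wc a d tau (g z) c) holomorphic_on V" if "c < rdig a d" for c
  proof -
    have "(\<lambda>u. Wc a d tau u c) holomorphic_on S0" unfolding Wc_def S0_def by (intro holomorphic_intros Pg_holo) auto
    then have "((\<lambda>u. Wc a d tau u c) \<circ> g) holomorphic_on V"
      by (rule holomorphic_on_compose_gen[OF g(1)[folded V_def]]) (use gV SS0 in auto)
    then show ?thesis by (simp add: o_def)
  qed
  have okW: "wt_ok (Wc a d tau (g z)) (rdig a d) \<rho>" if "z \<in> V" for z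
    unfolding wt_ok_def using r2 rho Sw[OF gV(1)[OF that]] Sw_Wc[OF ctx] gV(1)[OF that] SS0
    by (auto simp: r_def S0_def)
  have real: "\<exists>u>0. g (complex_of_real s) = complex_of_real u \<and> 0 < s \<and> Pg a d u = 1 / s"
    if sV: "complex_of_real s \<in> V" for s
  proof -
    define w where "w = g (complex_of_real s)"
    have wS: "w \<in> S" and fw: "f w = complex_of_real s" using gV[OF sV] by (auto simp: w_def)
    have cS: "cnj w \<in> S"
    proof -
      have cU: "cnj U0 = U0" by (simp add: U0_def)
      have "cnj w - U0 = cnj (w - U0)" by (subst complex_cnj_diff) (simp only: cU)
      then have "dist (cnj w) U0 = norm (cnj (w - U0))" by (simp add: dist_norm)
      also have "\<dots> = dist w U0" by (simp only: complex_mod_cnj dist_norm)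
      finally have "dist (cnj w) U0 = dist w U0" .
      then show ?thesis using wS by (simp add: S_def dist_commute)
    qed
    have "f (cnj w) = cnj (f w)" by (simp add: f_def Pg_cnj)
    also have "\<dots> = f w" using fw by simp
    finally have "cnj w = w" using injS cS wS by (meson inj_onD)
    then have "Im (cnj w) = Im w" by simp
    then have "Im w = 0" by simp
    then have wr: "w = complex_of_real (Re w)" by (simp add: complex_eq_iff)
    define u where "u = Re w"
    have "dist w U0 < u0" using wS by (simp add: S_def \<delta>_def dist_commute)
    moreover have "\<bar>Re (w - U0)\<bar> \<le> norm (w - U0)" by (rule abs_Re_le_cmod)
    ultimately have "\<bar>u - u0\<bar> < u0" by (simp add: u_def U0_def dist_norm)
    then have upos: "0 < u" by linarith
    have "Pg a d w = Pg a d (complex_of_real u)" unfolding u_def using wr by metis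
    then have "Pg a d w = complex_of_real (Pg a d u)" by (simp add: Pg_of_real)
    then have "complex_of_real s = inverse (complex_of_real (Pg a d u))"
      using fw by (simp add: f_def)
    then have "s = inverse (Pg a d u)" by (metis of_real_eq_iff of_real_inverse)
    moreover have Pp: "0 < Pg a d u" using Pg_pos[OF ctx, of u] upos by simp
    ultimately have "0 < s" by simp
    moreover have "Pg a d u = 1 / s" using \<open>s = inverse (Pg a d u)\<close> Pp by (simp add: divide_inverse)
    ultimately have "0 < s" "Pg a d u = 1 / s" by auto
    then show ?thesis using upos wr by (auto simp: w_def u_def)
  qed
  show ?thesis by (rule that[OF rho(1,2) V qV holW okW real])
qed

end


lemma diff_of_deriv: "(f has_real_derivative D) (at x) \<Longrightarrow> f differentiable (at x)"
  unfolding has_field_derivative_def differentiable_def by blast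

context
  fixes a d tau q
  assumes d1: "d \<ge> 1"
    and apos: "\<forall>j\<le>d. a j > 0"
    and tauc: "\<forall>i < rdig a d. tau i \<le> d"
    and card: "\<forall>j\<le>d. card {i. i < rdig a d \<and> tau i = j} = a j"
    and q: "0 < q" "q < 1 / real (a 0)"
begin

lemma main_q:
  assumes k: "k \<ge> 1"
  shows "(\<forall>x\<in>{0..1}. kth_deriv_exists (\<lambda>s. Sp a d tau q s x) k q) \<and> continuous_on {0..1} (Tk a d tau k q)"
proof -
  note ctx = d1 apos tauc card
  obtain \<rho> V g where rho: "0 \<le> \<rho>" "\<rho> < 1" and V: "open V" and qV: "complex_of_real q \<in> V"
    and holW: "\<And>c. c < rdig a d \<Longrightarrow> (\<lambda>z. Wc a d tau (g z) c) holomorphic_on V"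
    and okW: "\<And>z. z \<in> V \<Longrightarrow> wt_ok (Wc a d tau (g z)) (rdig a d) \<rho>"
    and real: "\<And>s. complex_of_real s \<in> V \<Longrightarrow> (\<exists>u>0. g (complex_of_real s) = complex_of_real u \<and> 0 < s \<and> Pg a d u = 1 / s)"
    using setup_obj[OF ctx q] by blast
  define r where "r = rdig a d"
  have r2: "2 \<le> r" using r2[OF ctx] by (simp add: r_def)
  define G where "G = (\<lambda>y z. Hs (Wc a d tau (g z)) r y)"
  have holG: "G y holomorphic_on V" for y
    unfolding G_def r_def
    by (rule Hs_holo[where W="\<lambda>z. Wc a d tau (g z)", OF V _ holW okW rho]) (use r2 in \<open>simp add: r_def\<close>)
  define I where "I = {s::real. complex_of_real s \<in> V}"
  have I: "open I" unfolding I_def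
    using continuous_open_vimage[OF V, of complex_of_real] by (simp add: vimage_def continuous_intros)
  have qI: "q \<in> I" using qV by (simp add: I_def)
  have key: "pok r (digit_weight a d tau s) \<and> (\<forall>y\<in>{0..1}. Fq a d tau s y = Re (G y (complex_of_real s))) \<and>
      (\<forall>c<r. complex_of_real (digit_weight a d tau s c) = Wc a d tau (g (complex_of_real s)) c \<and> 0 < digit_weight a d tau s c) \<and>
      Fq a d tau s = Fm r (digit_weight a d tau s)"
    if sI: "s \<in> I" for s
  proof -
    have sV: "complex_of_real s \<in> V" using sI by (simp add: I_def)
    obtain u where u: "0 < u" "g (complex_of_real s) = complex_of_real u" "0 < s" "Pg a d u = 1 / s"
      using real[OF sV] by blast
    define p where "p = digit_weight a d tau s"
    have pc: "p c = u ^ tau c / Pg a d u" if "c < r" for c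
      unfolding p_def using dw_eq[OF ctx u(3) u(1) u(4)] that by (simp add: r_def)
    have ppos: "0 < p c" if "c < r" for c
      using pc[OF that] weight_lt1(1)[OF ctx u(1)] that by (simp add: r_def)
    have pW: "complex_of_real (p c) = Wc a d tau (g (complex_of_real s)) c" if "c < r" for c
      using pc[OF that] u(2) by (simp add: Wc_real[OF ctx])
    have p0: "p c = 0" if "\<not> c < r" for c unfolding p_def using dw_zero[OF ctx] that by (simp add: r_def)
    have okS: "wt_ok (Wc a d tau (g (complex_of_real s))) r \<rho>" using okW[OF sV] by (simp add: r_def)
    have Sweq: "Sw (\<lambda>c. complex_of_real (p c)) r = Sw (Wc a d tau (g (complex_of_real s))) r"
      unfolding Sw_def by (rule sum.cong) (auto simp: pW)
    have "complex_of_real (\<Sum>c<r. p c) = Sw (\<lambda>c. complex_of_real (p c)) r" by (simp add: Sw_def)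
    also have "\<dots> = 1" using Sweq okS by (simp add: wt_ok_def)
    finally have psum: "(\<Sum>c<r. p c) = 1" by (metis of_real_eq_1_iff)
    have pok: "pok r p"
      unfolding pok_def using r2 psum ppos p0 by (auto simp: not_less intro: less_imp_le) (metis less_imp_le not_less p0 ppos order_refl)
    have wok: "wt_ok (\<lambda>c. complex_of_real (p c)) r \<rho>"
      using okS Sweq by (auto simp: wt_ok_def pW)
    have Feq: "Fq a d tau s = Fm r p"
      unfolding Fq_def nu_def Fm_def valr_def p_def r_def ..
    have "Fq a d tau s y = Re (G y (complex_of_real s))" if y: "y \<in> {0..1}" for y
    proof -
      have "Fq a d tau s y = Re (Hs (\<lambda>c. complex_of_real (p c)) r y)"
        using Fm_Hs[OF pok wok] y Feq by simp
      also have "Hs (\<lambda>c. complex_of_real (p c)) r y = G y (complex_of_real s)"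
        unfolding G_def using r2 pW by (intro Hs_cong) auto
      finally show ?thesis .
    qed
    then show ?thesis using pok pW ppos Feq by (simp add: p_def)
  qed
  define F where "F = Fq a d tau q"
  define w where "w = Wc a d tau (g (complex_of_real q))"
  have keyq: "pok r (digit_weight a d tau q)" "\<And>y. y \<in> {0..1} \<Longrightarrow> F y = Re (Hs w r y)"
    "\<And>c. c < r \<Longrightarrow> w c = complex_of_real (digit_weight a d tau q c) \<and> 0 < digit_weight a d tau q c"
    "F = Fm r (digit_weight a d tau q)"
    using key[OF qI] by (auto simp: F_def w_def G_def)
  have wok: "wt_ok w r \<rho>" using okW[OF qV] by (simp add: w_def r_def)
  have F0: "F 0 = 0" using keyq(2)[of 0] by (simp add: Hs_zero)
  have F1: "F 1 = 1" using keyq(2)[of 1] by (simp add: Hs_def)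
  have Fmono: "F y \<le> F y'" if "y \<le> y'" for y y'
    using Fm_mono[OF keyq(1) that] keyq(4) by simp
  have Fcont: "continuous_on {0..1} F"
    unfolding continuous_on_iff
  proof (intro ballI allI impI)
    fix y e :: real assume y: "y \<in> {0..1}" and e: "0 < e"
    obtain dd where dd: "0 < dd" "\<forall>w y y'. wt_ok w r \<rho> \<longrightarrow> 0 \<le> y \<longrightarrow> y \<le> 1 \<longrightarrow> 0 \<le> y' \<longrightarrow> y' \<le> 1 \<longrightarrow>
     \<bar>y - y'\<bar> < dd \<longrightarrow> norm (Hs w r y - Hs w r y') < e"
      using Hs_equicont[OF rho e, of r] by blast
    show "\<exists>d>0. \<forall>x'\<in>{0..1}. dist x' y < d \<longrightarrow> dist (F x') (F y) < e"
    proof (intro exI[of _ dd] conjI ballI impI)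
      show "0 < dd" by fact
      fix x' assume x': "x' \<in> {0..1}" and dx: "dist x' y < dd"
      have "norm (Hs w r x' - Hs w r y) < e" using dd(2) wok x' y dx by (auto simp: dist_real_def)
      moreover have "\<bar>F x' - F y\<bar> \<le> norm (Hs w r x' - Hs w r y)"
        using keyq(2)[OF x'] keyq(2)[OF y] abs_Re_le_cmod[of "Hs w r x' - Hs w r y"] by simp
      ultimately show "dist (F x') (F y) < e" by (simp add: dist_real_def)
    qed
  qed
  have rpos: "0 < real r" using r2 by simp
  have Fstrict: "F y < F y'" if y: "0 \<le> y" "y < y'" "y' \<le> 1" for y y'
  proof -
    have hpos: "0 < (y' - y) / 2" using y by simp
    have r1: "1 / real r < 1" using r2 by simp
    obtain n where n: "(1 / real r) ^ n < (y' - y) / 2" using real_arch_pow_inv[OF hpos r1] by blast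
    have rn: "0 < real r ^ n" using rpos by simp
    have n': "2 / real r ^ n < y' - y" using n rn by (simp add: power_one_over field_simps)
    define j where "j = nat \<lfloor>y * real r ^ n\<rfloor> + 1"
    have f0: "0 \<le> \<lfloor>y * real r ^ n\<rfloor>" using y rn by simp
    have jr: "y * real r ^ n < real j" "real j \<le> y * real r ^ n + 1"
      using f0 unfolding j_def by linarith+
    have a1: "y < real j / real r ^ n" using jr rn by (simp add: field_simps)
    have b1: "(real j + 1) / real r ^ n < y'"
    proof -
      have "real j + 1 \<le> y * real r ^ n + 2" using jr by linarith
      then have "(real j + 1) / real r ^ n \<le> (y * real r ^ n + 2) / real r ^ n"
        using rn by (intro divide_right_mono) auto
      also have "\<dots> = y + 2 / real r ^ n" using rn by (simp add: add_divide_distrib)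
      finally have "(real j + 1) / real r ^ n \<le> y + 2 / real r ^ n" .
      then show ?thesis using n' by simp
    qed
    have jle: "j + 1 \<le> r ^ n"
    proof -
      have "(real j + 1) / real r ^ n < 1" using b1 y by simp
      then have "real j + 1 < real r ^ n" using rn by (simp add: field_simps)
      then have "real (j + 1) < real (r ^ n)" by simp
      then show ?thesis by linarith
    qed
    have ab: "0 \<le> real j / real r ^ n" "(real j + 1) / real r ^ n \<le> 1"
      using rn apply simp using b1 y by linarith
    have st: "0 < Re (Hs w r ((real j + 1) / real r ^ n) - Hs w r (real j / real r ^ n))"
      using Hs_strict[OF wok, of "digit_weight a d tau q" n] keyq(3) jle by blast
    have "F (real j / real r ^ n) < F ((real j + 1) / real r ^ n)"
    proof -
      have "real j / real r ^ n \<le> (real j + 1) / real r ^ n" using rn by (intro divide_right_mono) auto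
      then have "real j / real r ^ n \<le> 1" using ab by linarith
      moreover have "0 \<le> (real j + 1) / real r ^ n" using rn by simp
      ultimately have "real j / real r ^ n \<le> 1" "0 \<le> (real j + 1) / real r ^ n" by auto
      then show ?thesis using st keyq(2)[of "real j / real r ^ n"] keyq(2)[of "(real j + 1) / real r ^ n"] ab by simp
    qed
    moreover have "F y \<le> F (real j / real r ^ n)" using a1 by (intro Fmono) simp
    moreover have "F ((real j + 1) / real r ^ n) \<le> F y'" using b1 by (intro Fmono) simp
    ultimately show ?thesis by linarith
  qed
  have injF: "inj_on F {0..1}"
  proof (rule inj_onI)
    fix y y' assume y: "y \<in> {0..1}" "y' \<in> {0..1}" and eq: "F y = F y'"
    show "y = y'"
    proof (rule ccontr)
      assume "y \<noteq> y'"
      then consider "y < y'" | "y' < y" by linarith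
      then show False
      proof cases
        case 1 then show False using Fstrict[of y y'] y eq by simp
      next
        case 2 then show False using Fstrict[of y' y] y eq by simp
      qed
    qed
  qed
  have imF: "F ` {0..1} = {0..1}"
  proof
    show "F ` {0..1} \<subseteq> {0..1}" using Fmono F0 F1 by (auto, metis, metis)
    show "{0..1} \<subseteq> F ` {0..1}"
    proof
      fix x :: real assume x: "x \<in> {0..1}"
      obtain y where "0 \<le> y" "y \<le> 1" "F y = x"
        using IVT'[of F 0 x 1, OF _ _ _ Fcont] x F0 F1 by auto
      then show "x \<in> F ` {0..1}" by auto
    qed
  qed
  define inv where "inv = inv_into {0..1} F"
  have invI: "inv x \<in> {0..1}" "F (inv x) = x" if "x \<in> {0..1}" for x
    using that imF inv_into_into[of x F "{0..1}"] f_inv_into_f[of x F "{0..1}"] by (auto simp: inv_def)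
  have invC: "continuous_on {0..1} inv"
  proof -
    have "continuous_on (F ` {0..1}) (the_inv_into {0..1} F)"
      by (rule continuous_on_inv_into[OF Fcont compact_Icc injF])
    moreover have "the_inv_into {0..1} F x = inv x" if "x \<in> F ` {0..1}" for x
      using that injF by (auto simp: inv_def the_inv_into_f_f)
    ultimately show ?thesis using imF by (metis continuous_on_cong)
  qed
  have perx: "kth_deriv_exists (\<lambda>s. Sp a d tau q s x) k q \<and> Tk a d tau k q x = Re ((deriv ^^ k) (G (inv x)) (complex_of_real q))"
    if x: "x \<in> {0..1}" for x
  proof -
    define \<phi> where "\<phi> = (\<lambda>s. Sp a d tau q s x)"
    have phi: "\<phi> s = Re (G (inv x) (complex_of_real s))" if "s \<in> I" for s
    proof -
      have A: "Fq a d tau s (inv x) = Re (G (inv x) (complex_of_real s))"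
        using key[OF that] invI(1)[OF x] by blast
      show ?thesis unfolding \<phi>_def Sp_def F_def[symmetric] inv_def[symmetric] by (rule A)
    qed
    have RD: "\<forall>s\<in>I. (deriv ^^ j) \<phi> s = Re ((deriv ^^ j) (G (inv x)) (complex_of_real s)) \<and>
           ((deriv ^^ j) \<phi> has_real_derivative Re ((deriv ^^ Suc j) (G (inv x)) (complex_of_real s))) (at s)" for j
      by (rule real_higher_deriv[OF holG V I _ phi]) (simp add: I_def)
    have dj: "(deriv ^^ j) \<phi> differentiable (at s)" if "s \<in> I" for j s
      using RD[of j] that diff_of_deriv by blast
    have "kth_deriv_exists \<phi> k q"
      unfolding kth_deriv_exists_def
    proof (intro conjI allI impI)
      fix j assume "j + 1 < k"
      show "\<forall>\<^sub>F s in nhds q. (deriv ^^ j) \<phi> differentiable (at s)"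
        unfolding eventually_nhds using I qI dj by blast
    next
      show "(deriv ^^ (k - 1)) \<phi> differentiable (at q)" using dj qI by blast
    qed
    moreover have "Tk a d tau k q x = Re ((deriv ^^ k) (G (inv x)) (complex_of_real q))"
      unfolding Tk_def using RD[of k] qI by (simp add: \<phi>_def)
    ultimately show ?thesis by (simp add: \<phi>_def)
  qed
  obtain R where R: "0 < R" "cball (complex_of_real q) R \<subseteq> V" using V qV open_contains_cball by blast
  have H0: "continuous_on {0..1} (\<lambda>y. (deriv ^^ k) (G y) (complex_of_real q))"
  proof (rule deriv_cont_param[OF V R holG])
    fix e :: real assume e: "0 < e"
    obtain dd where dd: "0 < dd" "\<forall>w y y'. wt_ok w r \<rho> \<longrightarrow> 0 \<le> y \<longrightarrow> y \<le> 1 \<longrightarrow> 0 \<le> y' \<longrightarrow> y' \<le> 1 \<longrightarrow>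
     \<bar>y - y'\<bar> < dd \<longrightarrow> norm (Hs w r y - Hs w r y') < e"
      using Hs_equicont[OF rho e, of r] by blast
    show "\<exists>d>0. \<forall>y\<in>{0..1}. \<forall>y'\<in>{0..1}. \<bar>y - y'\<bar> < d \<longrightarrow> (\<forall>z\<in>V. norm (G y z - G y' z) < e)"
      using dd okW unfolding G_def r_def by (intro exI[of _ dd]) auto
  qed (use k in auto)
  have "continuous_on {0..1} (\<lambda>x. Re ((deriv ^^ k) (G (inv x)) (complex_of_real q)))"
    by (intro continuous_intros continuous_on_compose2[OF H0 invC]) (use invI in auto)
  then have "continuous_on {0..1} (Tk a d tau k q)"
    using perx by (metis (no_types, lifting) continuous_on_cong)
  then show ?thesis using perx by blast
qed


end


theorem mainTheorem9:
  fixes a :: "nat \<Rightarrow> nat" and d :: nat and tau :: "nat \<Rightarrow> nat"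
  assumes "d \<ge> 1"
    and "\<forall>j\<le>d. a j > 0"
    and "\<forall>i < rdig a d. tau i \<le> d"
    and "\<forall>j\<le>d. card {i. i < rdig a d \<and> tau i = j} = a j"
  shows "\<forall>q k. 0 < q \<and> q < 1 / real (a 0) \<and> k \<ge> 1 \<longrightarrow>
           (\<forall>x\<in>{0..1}. kth_deriv_exists (\<lambda>s. Sp a d tau q s x) k q) \<and>
           continuous_on {0..1} (Tk a d tau k q)"
proof (intro allI impI)
  fix q :: real and k :: nat
  assume h: "0 < q \<and> q < 1 / real (a 0) \<and> k \<ge> 1"
  then have q: "0 < q" "q < 1 / real (a 0)" and k: "k \<ge> 1" by auto
  show "(\<forall>x\<in>{0..1}. kth_deriv_exists (\<lambda>s. Sp a d tau q s x) k q) \<and> continuous_on {0..1} (Tk a d tau k q)"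
    by (rule main_q[OF assms q k])
qed

end
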